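(* Let $S$ be a modular lattice of finite length and let $(L_x)_{x\in S}$, $(\varphi_{yx})_{x\prec y}$ be a locally $S$-connected system. For $x<y$ in $S$ and a maximal chain $x=x_0\prec x_1\prec\cdots\prec x_n=y$, put $\varphi_{yx}:=\varphi_{x_nx_{n-1}}\circ\cdots\circ\varphi_{x_2x_1}\circ\varphi_{x_1x_0}$ (composition of partial maps), and put $\varphi_{xx}=\mathrm{id}_{L_x}$. Then $\varphi_{yx}$ does not depend on the choice of the maximal chain, and the lattices $L_x$ ($x\in S$) together with the maps $\varphi_{yx}$ ($x\le y$) form an $S$-connected system.
   Context: A \emph{partial bijection} $\varphi$ from a set $A$ to a set $B$ is a bijection from a subset $\operatorname{dom}\varphi\subseteq A$ onto a subset $\operatorname{im}\varphi\subseteq B$ (possibly empty); composites $\psi\circ\varphi$ of partial maps are defined at $a$ iff $a\in\operatorname{dom}\varphi$ and $\varphi(a)\in\operatorname{dom}\psi$, and equality of partial maps means equal domains and equal values. $x\prec y$ means $y$ covers $x$. For a modular lattice $S$ of finite length, a \emph{locally $S$-connected system} consists of lattices $L_x$ ($x\in S$) of finite length and partial bijections $\varphi_{yx}$ from $L_x$ to $L_y$ for all $x\prec y$ in $S$ such that for all $u,v,x,y\in S$ with $u\prec v$ and $x\wedge y\prec x$, $x\wedge y\prec y$, $x\prec x\vee y$, $y\prec x\vee y$: (22) $\varphi_{vu}$ is a lattice isomorphism from a nonempty filter of $L_u$ onto an ideal of $L_v$; (23) $\varphi_{(x\vee y)x}\circ\varphi_{x(x\wedge y)}=\varphi_{(x\vee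 y)y}\circ\varphi_{y(x\wedge y)}$, and this common partial map is denoted $\varphi_{(x\vee y)(x\wedge y)}$; (24) $\operatorname{im}\varphi_{(x\vee y)x}\cap\operatorname{im}\varphi_{(x\vee y)y}\subseteq\operatorname{im}\varphi_{(x\vee y)(x\wedge y)}$; (24$^\delta$) $\operatorname{dom}\varphi_{x(x\wedge y)}\cap\operatorname{dom}\varphi_{y(x\wedge y)}\subseteq\operatorname{dom}\varphi_{(x\vee y)(x\wedge y)}$. For a lattice $S$ of finite length, an \emph{$S$-connected system} consists of lattices $L_x$ ($x\in S$) of finite length and partial bijections $\varphi_{yx}$ from $L_x$ to $L_y$ for all $x\le y$ in $S$ such that for all $x,y\in S$: (17) if $\varphi_{yx}\ne\emptyset$ then $\operatorname{dom}\varphi_{yx}$ is a filter of $L_x$, $\operatorname{im}\varphi_{yx}$ is an ideal of $L_y$ and $\varphi_{yx}$ is a lattice isomorphism between them; $\varphi_{xx}=\mathrm{id}_{L_x}$; (18) if $x\prec y$ then $\varphi_{yx}\ne\emptyset$; (19) for $x\le z\le y$: $\varphi_{yx}=\varphi_{yz}\circ\varphi_{zx}$; (20) $\operatorname{im}\varphi_{(x\vee y)x}\cap\operatorname{im}\varphi_{(x\vee y)y}\subseteq\operatorname{im}\varphi_{(x\vee y)(x\wedge y)}$; (20$^\delta$) $\operatorname{dom}\varphi_{x(x\wedge y)}\cap\operatorname{dom}\varphi_{y(x\wedge y)}\subseteq\operatorname{dom}\varphi_{(x\vee y)(x\wedge y)}$. *)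

theory Defs
  imports "HOL-Algebra.Lattice"
begin

definition covers :: "'s::order \<Rightarrow> 's \<Rightarrow> bool" (infix "\<prec>" 50) where
  "x \<prec> y \<longleftrightarrow> x < y \<and> \<not> (\<exists>z. x < z \<and> z < y)"

definition modular_lattice :: "'s::lattice itself \<Rightarrow> bool" where
  "modular_lattice _ \<longleftrightarrow>
     (\<forall>a b c :: 's. a \<le> c \<longrightarrow> Lattices.sup a (Lattices.inf b c) = Lattices.inf (Lattices.sup a b) c)"

definition finite_length :: "'s::order itself \<Rightarrow> bool" where
  "finite_length _ \<longleftrightarrow>
     (\<exists>n::nat. \<forall>C :: 's set. (\<forall>a\<in>C. \<forall>b\<in>C. a \<le> b \<or> b \<le> a) \<longrightarrow> finite C \<and> card C \<le> n)"

definition lattice_finite_length :: "('a, 'b) gorder_scheme \<Rightarrow> bool" where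
  "lattice_finite_length L \<longleftrightarrow> lattice L \<and>
     (\<exists>n::nat. \<forall>C \<subseteq> carrier L. (\<forall>a\<in>C. \<forall>b\<in>C. a \<sqsubseteq>\<^bsub>L\<^esub> b \<or> b \<sqsubseteq>\<^bsub>L\<^esub> a)
        \<longrightarrow> finite C \<and> card C \<le> n)"

definition lat_filter :: "('a, 'b) gorder_scheme \<Rightarrow> 'a set \<Rightarrow> bool" where
  "lat_filter L F \<longleftrightarrow> F \<subseteq> carrier L \<and>
     (\<forall>a\<in>F. \<forall>b\<in>carrier L. a \<sqsubseteq>\<^bsub>L\<^esub> b \<longrightarrow> b \<in> F) \<and>
     (\<forall>a\<in>F. \<forall>b\<in>F. a \<sqinter>\<^bsub>L\<^esub> b \<in> F)"

definition lat_ideal :: "('a, 'b) gorder_scheme \<Rightarrow> 'a set \<Rightarrow> bool" where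
  "lat_ideal L I \<longleftrightarrow> I \<subseteq> carrier L \<and>
     (\<forall>a\<in>I. \<forall>b\<in>carrier L. b \<sqsubseteq>\<^bsub>L\<^esub> a \<longrightarrow> b \<in> I) \<and>
     (\<forall>a\<in>I. \<forall>b\<in>I. a \<squnion>\<^bsub>L\<^esub> b \<in> I)"

definition partial_bij :: "('a, 'b) gorder_scheme \<Rightarrow> ('a, 'b) gorder_scheme \<Rightarrow> ('a \<rightharpoonup> 'a) \<Rightarrow> bool" where
  "partial_bij L M f \<longleftrightarrow> dom f \<subseteq> carrier L \<and> ran f \<subseteq> carrier M \<and> inj_on f (dom f)"

definition lattice_iso_between :: "('a, 'b) gorder_scheme \<Rightarrow> ('a, 'b) gorder_scheme \<Rightarrow> ('a \<rightharpoonup> 'a) \<Rightarrow> bool" where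
  "lattice_iso_between L M f \<longleftrightarrow> inj_on f (dom f) \<and>
     (\<forall>a\<in>dom f. \<forall>b\<in>dom f.
        f (a \<sqinter>\<^bsub>L\<^esub> b) = Some (the (f a) \<sqinter>\<^bsub>M\<^esub> the (f b)) \<and>
        f (a \<squnion>\<^bsub>L\<^esub> b) = Some (the (f a) \<squnion>\<^bsub>M\<^esub> the (f b)))"

definition id_on_carrier :: "('a, 'b) gorder_scheme \<Rightarrow> ('a \<rightharpoonup> 'a)" where
  "id_on_carrier L = (\<lambda>a. if a \<in> carrier L then Some a else None)"

definition locally_connected_system ::
  "('s::lattice \<Rightarrow> ('a, 'b) gorder_scheme) \<Rightarrow> ('s \<Rightarrow> 's \<Rightarrow> ('a \<rightharpoonup> 'a)) \<Rightarrow> bool" where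
  "locally_connected_system L \<phi> \<longleftrightarrow>
     (\<forall>x. lattice_finite_length (L x)) \<and>
     (\<forall>u v. u \<prec> v \<longrightarrow> partial_bij (L u) (L v) (\<phi> v u)) \<and>
     \<comment> \<open>(22)\<close>
     (\<forall>u v. u \<prec> v \<longrightarrow> dom (\<phi> v u) \<noteq> {} \<and> lat_filter (L u) (dom (\<phi> v u)) \<and>
            lat_ideal (L v) (ran (\<phi> v u)) \<and> lattice_iso_between (L u) (L v) (\<phi> v u)) \<and>
     (\<forall>x y. Lattices.inf x y \<prec> x \<and> Lattices.inf x y \<prec> y \<and>
            x \<prec> Lattices.sup x y \<and> y \<prec> Lattices.sup x y \<longrightarrow>
        \<comment> \<open>(23)\<close>
        (\<phi> (Lattices.sup x y) x \<circ>\<^sub>m \<phi> x (Lattices.inf x y)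
           = \<phi> (Lattices.sup x y) y \<circ>\<^sub>m \<phi> y (Lattices.inf x y)) \<and>
        \<comment> \<open>(24)\<close>
        (ran (\<phi> (Lattices.sup x y) x) \<inter> ran (\<phi> (Lattices.sup x y) y)
           \<subseteq> ran (\<phi> (Lattices.sup x y) x \<circ>\<^sub>m \<phi> x (Lattices.inf x y))) \<and>
        \<comment> \<open>(24delta)\<close>
        (dom (\<phi> x (Lattices.inf x y)) \<inter> dom (\<phi> y (Lattices.inf x y))
           \<subseteq> dom (\<phi> (Lattices.sup x y) x \<circ>\<^sub>m \<phi> x (Lattices.inf x y))))"

definition connected_system ::
  "('s::lattice \<Rightarrow> ('a, 'b) gorder_scheme) \<Rightarrow> ('s \<Rightarrow> 's \<Rightarrow> ('a \<rightharpoonup> 'a)) \<Rightarrow> bool" where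
  "connected_system L \<Phi> \<longleftrightarrow>
     (\<forall>x. lattice_finite_length (L x)) \<and>
     (\<forall>x y. x \<le> y \<longrightarrow> partial_bij (L x) (L y) (\<Phi> y x)) \<and>
     \<comment> \<open>(17)\<close>
     (\<forall>x y. x \<le> y \<longrightarrow> \<Phi> y x \<noteq> Map.empty \<longrightarrow>
        lat_filter (L x) (dom (\<Phi> y x)) \<and> lat_ideal (L y) (ran (\<Phi> y x)) \<and>
        lattice_iso_between (L x) (L y) (\<Phi> y x)) \<and>
     (\<forall>x. \<Phi> x x = id_on_carrier (L x)) \<and>
     \<comment> \<open>(18)\<close>
     (\<forall>x y. x \<prec> y \<longrightarrow> \<Phi> y x \<noteq> Map.empty) \<and>
     \<comment> \<open>(19)\<close>
     (\<forall>x y z. x \<le> z \<and> z \<le> y \<longrightarrow> \<Phi> y x = \<Phi> y z \<circ>\<^sub>m \<Phi> z x) \<and>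
     \<comment> \<open>(20)\<close>
     (\<forall>x y. ran (\<Phi> (Lattices.sup x y) x) \<inter> ran (\<Phi> (Lattices.sup x y) y)
              \<subseteq> ran (\<Phi> (Lattices.sup x y) (Lattices.inf x y))) \<and>
     \<comment> \<open>(20delta)\<close>
     (\<forall>x y. dom (\<Phi> x (Lattices.inf x y)) \<inter> dom (\<Phi> y (Lattices.inf x y))
              \<subseteq> dom (\<Phi> (Lattices.sup x y) (Lattices.inf x y)))"

definition maximal_chain :: "'s::order \<Rightarrow> 's \<Rightarrow> 's list \<Rightarrow> bool" where
  "maximal_chain x y xs \<longleftrightarrow> xs \<noteq> [] \<and> hd xs = x \<and> last xs = y \<and>
     (\<forall>i. Suc i < length xs \<longrightarrow> xs ! i \<prec> xs ! Suc i)"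

(* chain_comp \<phi> [x0,...,xn] = \<phi> xn x(n-1) \<circ>m ... \<circ>m \<phi> x1 x0  (for n \<ge> 1) *)
fun chain_comp :: "('s \<Rightarrow> 's \<Rightarrow> ('a \<rightharpoonup> 'a)) \<Rightarrow> 's list \<Rightarrow> ('a \<rightharpoonup> 'a)" where
  "chain_comp \<phi> (a # b # rest) = chain_comp \<phi> (b # rest) \<circ>\<^sub>m \<phi> b a"
| "chain_comp \<phi> _ = Some"

definition induced_maps ::
  "('s::lattice \<Rightarrow> ('a, 'b) gorder_scheme) \<Rightarrow> ('s \<Rightarrow> 's \<Rightarrow> ('a \<rightharpoonup> 'a)) \<Rightarrow> 's \<Rightarrow> 's \<Rightarrow> ('a \<rightharpoonup> 'a)" where
  "induced_maps L \<phi> y x =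
     (if x = y then id_on_carrier (L x)
      else if x < y then chain_comp \<phi> (SOME xs. maximal_chain x y xs)
      else Map.empty)"

end

theory Submission
  imports Defs
begin


definition good :: "('a, 'b) gorder_scheme \<Rightarrow> ('a, 'b) gorder_scheme \<Rightarrow> ('a \<rightharpoonup> 'a) \<Rightarrow> bool" where
  "good L M f \<longleftrightarrow> lat_filter L (dom f) \<and> lat_ideal M (ran f) \<and> lattice_iso_between L M f"

lemma map_comp_Some_right[simp]: "f \<circ>\<^sub>m Some = f"
  by (rule ext) (simp add: map_comp_def)

lemma map_comp_Some_left[simp]: "Some \<circ>\<^sub>m f = f"
  by (rule ext) (simp add: map_comp_def split: option.split)

lemma map_comp_assoc: "(h \<circ>\<^sub>m g) \<circ>\<^sub>m f = h \<circ>\<^sub>m (g \<circ>\<^sub>m f)"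
  by (rule ext) (simp add: map_comp_def split: option.split)

lemma good_parts:
  assumes "good L M f"
  shows "dom f \<subseteq> carrier L" "ran f \<subseteq> carrier M" "inj_on f (dom f)"
  using assms unfolding good_def lat_filter_def lat_ideal_def lattice_iso_between_def by auto

lemma good_join:
  assumes "good L M f" "f a = Some a'" "f b = Some b'"
  shows "f (a \<squnion>\<^bsub>L\<^esub> b) = Some (a' \<squnion>\<^bsub>M\<^esub> b')" "f (a \<sqinter>\<^bsub>L\<^esub> b) = Some (a' \<sqinter>\<^bsub>M\<^esub> b')"
  using assms unfolding good_def lattice_iso_between_def by (auto simp: domI)

lemma good_mono:
  assumes L: "lattice L" and M: "lattice M" and g: "good L M f"
    and fa: "f a = Some a'" and fb: "f b = Some b'"
  shows "a \<sqsubseteq>\<^bsub>L\<^esub> b \<longleftrightarrow> a' \<sqsubseteq>\<^bsub>M\<^esub> b'"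
proof -
  have ca: "a \<in> carrier L" "b \<in> carrier L" using good_parts(1)[OF g] fa fb by (auto simp: domI)
  have cb: "a' \<in> carrier M" "b' \<in> carrier M" using good_parts(2)[OF g] fa fb by (auto simp: ranI)
  have j: "f (a \<squnion>\<^bsub>L\<^esub> b) = Some (a' \<squnion>\<^bsub>M\<^esub> b')" using good_join[OF g fa fb] by simp
  have eL: "a \<sqsubseteq>\<^bsub>L\<^esub> b \<longleftrightarrow> a \<squnion>\<^bsub>L\<^esub> b = b" using lattice.le_iff_meet[OF L ca] .
  have eM: "a' \<sqsubseteq>\<^bsub>M\<^esub> b' \<longleftrightarrow> a' \<squnion>\<^bsub>M\<^esub> b' = b'" using lattice.le_iff_meet[OF M cb] .
  have inj: "inj_on f (dom f)" using good_parts(3)[OF g] .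
  show ?thesis
  proof
    assume "a \<sqsubseteq>\<^bsub>L\<^esub> b"
    then have "a \<squnion>\<^bsub>L\<^esub> b = b" using eL by simp
    then show "a' \<sqsubseteq>\<^bsub>M\<^esub> b'" using j fb eM by simp
  next
    assume "a' \<sqsubseteq>\<^bsub>M\<^esub> b'"
    then have "f (a \<squnion>\<^bsub>L\<^esub> b) = f b" using j fb eM by simp
    moreover have "a \<squnion>\<^bsub>L\<^esub> b \<in> dom f" using j by (simp add: domI)
    moreover have "b \<in> dom f" using fb by (simp add: domI)
    ultimately have "a \<squnion>\<^bsub>L\<^esub> b = b" using inj by (meson inj_onD)
    then show "a \<sqsubseteq>\<^bsub>L\<^esub> b" using eL by simp
  qed
qed

lemma good_id:
  assumes L: "lattice L"
  shows "good L L (id_on_carrier L)"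
proof -
  interpret lattice L by fact
  have d: "dom (id_on_carrier L) = carrier L" by (auto simp: id_on_carrier_def split: if_splits)
  have r: "ran (id_on_carrier L) = carrier L" by (auto simp: id_on_carrier_def ran_def split: if_splits)
  show ?thesis unfolding good_def d r lat_filter_def lat_ideal_def lattice_iso_between_def
    by (auto simp: id_on_carrier_def inj_on_def split: if_splits)
qed

lemma good_comp:
  assumes L: "lattice L" and M: "lattice M" and N: "lattice N"
    and f: "good L M f" and g: "good M N g"
  shows "good L N (g \<circ>\<^sub>m f)"
proof -
  have fF: "lat_filter L (dom f)" and fI: "lat_ideal M (ran f)" and gF: "lat_filter M (dom g)"
    and gI: "lat_ideal N (ran g)" using f g unfolding good_def by auto
  have fd: "dom f \<subseteq> carrier L" and fr: "ran f \<subseteq> carrier M" and fi: "inj_on f (dom f)"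
    using good_parts[OF f] by auto
  have gd: "dom g \<subseteq> carrier M" and gr: "ran g \<subseteq> carrier N" and gi: "inj_on g (dom g)"
    using good_parts[OF g] by auto
  have dcomp: "dom (g \<circ>\<^sub>m f) = {a. \<exists>a'. f a = Some a' \<and> a' \<in> dom g}"
    by (auto simp: dom_def map_comp_Some_iff)
  have rcomp: "ran (g \<circ>\<^sub>m f) = {c. \<exists>a'. a' \<in> ran f \<and> g a' = Some c}"
    by (auto simp: ran_def map_comp_Some_iff)
  have filt: "lat_filter L (dom (g \<circ>\<^sub>m f))"
    unfolding lat_filter_def
  proof (intro conjI ballI impI)
    show "dom (g \<circ>\<^sub>m f) \<subseteq> carrier L" using fd dcomp by auto
  next
    fix a b assume a: "a \<in> dom (g \<circ>\<^sub>m f)" and b: "b \<in> carrier L" and ab: "a \<sqsubseteq>\<^bsub>L\<^esub> b"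
    obtain a' where fa: "f a = Some a'" and a'g: "a' \<in> dom g" using a dcomp by auto
    have "b \<in> dom f" using fF a b ab fa unfolding lat_filter_def by (auto simp: domI)
    then obtain b' where fb: "f b = Some b'" by auto
    have "a' \<sqsubseteq>\<^bsub>M\<^esub> b'" using good_mono[OF L M f fa fb] ab by simp
    moreover have "b' \<in> carrier M" using fr fb by (auto simp: ranI)
    ultimately have "b' \<in> dom g" using gF a'g unfolding lat_filter_def by auto
    then show "b \<in> dom (g \<circ>\<^sub>m f)" using fb dcomp by auto
  next
    fix a b assume a: "a \<in> dom (g \<circ>\<^sub>m f)" and b: "b \<in> dom (g \<circ>\<^sub>m f)"
    obtain a' where fa: "f a = Some a'" and a'g: "a' \<in> dom g" using a dcomp by auto
    obtain b' where fb: "f b = Some b'" and b'g: "b' \<in> dom g" using b dcomp by auto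
    have "f (a \<sqinter>\<^bsub>L\<^esub> b) = Some (a' \<sqinter>\<^bsub>M\<^esub> b')" using good_join[OF f fa fb] by simp
    moreover have "a' \<sqinter>\<^bsub>M\<^esub> b' \<in> dom g" using gF a'g b'g unfolding lat_filter_def by auto
    ultimately show "a \<sqinter>\<^bsub>L\<^esub> b \<in> dom (g \<circ>\<^sub>m f)" using dcomp by auto
  qed
  have idl: "lat_ideal N (ran (g \<circ>\<^sub>m f))"
    unfolding lat_ideal_def
  proof (intro conjI ballI impI)
    show "ran (g \<circ>\<^sub>m f) \<subseteq> carrier N" using gr rcomp by (auto simp: ranI)
  next
    fix c d assume c: "c \<in> ran (g \<circ>\<^sub>m f)" and d: "d \<in> carrier N" and dc: "d \<sqsubseteq>\<^bsub>N\<^esub> c"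
    obtain a' where a'f: "a' \<in> ran f" and ga: "g a' = Some c" using c rcomp by auto
    have "d \<in> ran g" using gI c d dc ga unfolding lat_ideal_def by (auto simp: ranI)
    then obtain b' where gb: "g b' = Some d" by (auto simp: ran_def)
    have "b' \<sqsubseteq>\<^bsub>M\<^esub> a'" using good_mono[OF M N g gb ga] dc by simp
    moreover have "b' \<in> carrier M" using gd gb by (auto simp: domI)
    ultimately have "b' \<in> ran f" using fI a'f unfolding lat_ideal_def by auto
    then show "d \<in> ran (g \<circ>\<^sub>m f)" using gb rcomp by auto
  next
    fix c d assume c: "c \<in> ran (g \<circ>\<^sub>m f)" and d: "d \<in> ran (g \<circ>\<^sub>m f)"
    obtain a' where a'f: "a' \<in> ran f" and ga: "g a' = Some c" using c rcomp by auto
    obtain b' where b'f: "b' \<in> ran f" and gb: "g b' = Some d" using d rcomp by auto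
    have j: "g (a' \<squnion>\<^bsub>M\<^esub> b') = Some (c \<squnion>\<^bsub>N\<^esub> d)" using good_join[OF g ga gb] by simp
    have "a' \<squnion>\<^bsub>M\<^esub> b' \<in> ran f" using fI a'f b'f unfolding lat_ideal_def by auto
    then show "c \<squnion>\<^bsub>N\<^esub> d \<in> ran (g \<circ>\<^sub>m f)" using j rcomp by auto
  qed
  have iso: "lattice_iso_between L N (g \<circ>\<^sub>m f)"
    unfolding lattice_iso_between_def
  proof (intro conjI ballI)
    show "inj_on (g \<circ>\<^sub>m f) (dom (g \<circ>\<^sub>m f))"
    proof (rule inj_onI)
      fix a b assume a: "a \<in> dom (g \<circ>\<^sub>m f)" and b: "b \<in> dom (g \<circ>\<^sub>m f)" and e: "(g \<circ>\<^sub>m f) a = (g \<circ>\<^sub>m f) b"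
      obtain a' where fa: "f a = Some a'" and a'g: "a' \<in> dom g" using a dcomp by auto
      obtain b' where fb: "f b = Some b'" and b'g: "b' \<in> dom g" using b dcomp by auto
      have "g a' = g b'" using e fa fb by simp
      then have "a' = b'" using gi a'g b'g by (meson inj_onD)
      then have "f a = f b" using fa fb by simp
      then show "a = b" using fi fa fb by (meson domI inj_onD)
    qed
  next
    fix a b assume a: "a \<in> dom (g \<circ>\<^sub>m f)" and b: "b \<in> dom (g \<circ>\<^sub>m f)"
    obtain a' where fa: "f a = Some a'" and a'g: "a' \<in> dom g" using a dcomp by auto
    obtain b' where fb: "f b = Some b'" and b'g: "b' \<in> dom g" using b dcomp by auto
    obtain a'' where ga: "g a' = Some a''" using a'g by auto
    obtain b'' where gb: "g b' = Some b''" using b'g by auto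
    show "(g \<circ>\<^sub>m f) (a \<sqinter>\<^bsub>L\<^esub> b) = Some (the ((g \<circ>\<^sub>m f) a) \<sqinter>\<^bsub>N\<^esub> the ((g \<circ>\<^sub>m f) b))"
      using good_join(2)[OF f fa fb] good_join(2)[OF g ga gb] fa fb ga gb by simp
    show "(g \<circ>\<^sub>m f) (a \<squnion>\<^bsub>L\<^esub> b) = Some (the ((g \<circ>\<^sub>m f) a) \<squnion>\<^bsub>N\<^esub> the ((g \<circ>\<^sub>m f) b))"
      using good_join(1)[OF f fa fb] good_join(1)[OF g ga gb] fa fb ga gb by simp
  qed
  show ?thesis using filt idl iso unfolding good_def by simp
qed




lemma modularD: "modular_lattice TYPE('s::lattice) \<Longrightarrow> (a::'s) \<le> c \<Longrightarrow>
   Lattices.sup a (Lattices.inf b c) = Lattices.inf (Lattices.sup a b) c"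
  unfolding modular_lattice_def by blast

lemma coversD: "x \<prec> y \<Longrightarrow> x < y" "x \<prec> y \<Longrightarrow> x < z \<Longrightarrow> z < y \<Longrightarrow> False"
  unfolding covers_def by auto

lemma cover_inf:
  fixes x a b :: "'s::lattice"
  assumes "x \<prec> a" "x \<prec> b" "a \<noteq> b"
  shows "Lattices.inf a b = x"
proof (rule ccontr)
  assume ne: "Lattices.inf a b \<noteq> x"
  have "x \<le> Lattices.inf a b" using coversD(1)[OF assms(1)] coversD(1)[OF assms(2)] by (simp add: less_imp_le)
  then have lt: "x < Lattices.inf a b" using ne by (metis order.not_eq_order_implies_strict)
  have "\<not> Lattices.inf a b < a" using coversD(2)[OF assms(1) lt] by blast
  then have "Lattices.inf a b = a" using inf_le1[of a b] by (metis order.not_eq_order_implies_strict)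
  then have "a \<le> b" by (metis inf.orderI)
  then have "a < b" using assms(3) by simp
  then show False using coversD(2)[OF assms(2)] coversD(1)[OF assms(1)] by blast
qed

lemma cover_sup:
  fixes x a b :: "'s::lattice"
  assumes md: "modular_lattice TYPE('s)" and c: "x \<prec> a" "x \<prec> b" "a \<noteq> b"
  shows "a \<prec> Lattices.sup a b"
  unfolding covers_def
proof (intro conjI notI)
  show "a < Lattices.sup a b"
  proof (rule ccontr)
    assume "\<not> a < Lattices.sup a b"
    then have "a = Lattices.sup a b" using sup_ge1[of a b] by (auto simp: less_le)
    then have "b \<le> a" by (metis sup_ge2)
    then have "b < a" using c(3) by simp
    then show False using coversD(2)[OF c(1)] coversD(1)[OF c(2)] by blast
  qed
next
  assume "\<exists>z. a < z \<and> z < Lattices.sup a b"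
  then obtain z where az: "a < z" and zs: "z < Lattices.sup a b" by blast
  have m: "Lattices.sup a (Lattices.inf b z) = z"
    using modularD[OF md, of a z b] az zs by (simp add: inf.absorb2 less_imp_le)
  have xa: "x \<le> a" using coversD(1)[OF c(1)] by simp
  have xz: "x \<le> z" using xa less_imp_le[OF az] by (rule order.trans)
  have xbz: "x \<le> Lattices.inf b z" using xz coversD(1)[OF c(2)] by (simp add: less_imp_le)
  show False
  proof (cases "Lattices.inf b z = x")
    case True
    then have "z = a" using m xa by (simp add: sup.absorb1)
    then show False using az by simp
  next
    case False
    then have "x < Lattices.inf b z" using xbz by (metis order.not_eq_order_implies_strict)
    then have "\<not> Lattices.inf b z < b" using coversD(2)[OF c(2)] by blast
    then have "Lattices.inf b z = b" using inf_le1[of b z] by (metis order.not_eq_order_implies_strict)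
    then have "b \<le> z" by (metis inf.orderI)
    then have "Lattices.sup a b \<le> z" using less_imp_le[OF az] by simp
    then show False using leD zs by blast
  qed
qed




definition bnd :: "'s::order \<Rightarrow> 's \<Rightarrow> nat \<Rightarrow> bool" where
  "bnd a b k \<longleftrightarrow> (\<forall>C \<subseteq> {a..b}. (\<forall>p\<in>C. \<forall>q\<in>C. p \<le> q \<or> q \<le> p) \<longrightarrow> finite C \<and> card C \<le> k)"

lemma bndD: "bnd a b k \<Longrightarrow> C \<subseteq> {a..b} \<Longrightarrow> (\<forall>p\<in>C. \<forall>q\<in>C. p \<le> q \<or> q \<le> p) \<Longrightarrow> finite C \<and> card C \<le> k"
  unfolding bnd_def by simp

lemma bnd_ex: "finite_length TYPE('s::order) \<Longrightarrow> \<exists>k. bnd (a::'s) b k"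
  unfolding finite_length_def bnd_def by blast

lemma bnd_zero: "bnd a b 0 \<Longrightarrow> a \<le> b \<Longrightarrow> False"
  unfolding bnd_def by (drule spec[of _ "{a}"]) auto

lemma bnd_low:
  assumes "bnd a b (Suc k)" "a < a'" "a' \<le> b"
  shows "bnd a' b k"
  unfolding bnd_def
proof (intro allI impI)
  fix C assume C: "C \<subseteq> {a'..b}" and ch: "\<forall>p\<in>C. \<forall>q\<in>C. p \<le> q \<or> q \<le> p"
  have "insert a C \<subseteq> {a..b}"
  proof -
    have "\<forall>c\<in>C. a \<le> c \<and> c \<le> b"
    proof
      fix c assume "c \<in> C" then have 1: "a' \<le> c" "c \<le> b" using C by auto
      have "a \<le> c" using assms(2) 1(1) by (rule less_imp_le[OF less_le_trans])
      then show "a \<le> c \<and> c \<le> b" using 1 by simp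
    qed
    moreover have "a \<le> b" using assms(2,3) by (rule less_imp_le[OF less_le_trans])
    ultimately show ?thesis by auto
  qed
  moreover have "\<forall>p\<in>insert a C. \<forall>q\<in>insert a C. p \<le> q \<or> q \<le> p"
  proof -
    have "\<forall>c\<in>C. a \<le> c"
    proof
      fix c assume "c \<in> C" then have "a' \<le> c" using C by auto
      then show "a \<le> c" using less_imp_le[OF less_le_trans[OF assms(2)]] by blast
    qed
    then show ?thesis using ch by auto
  qed
  ultimately have "finite (insert a C) \<and> card (insert a C) \<le> Suc k"
    by (rule bndD[OF assms(1)])
  moreover have "a \<notin> C"
  proof
    assume "a \<in> C" then have "a' \<le> a" using C by auto
    then show False using leD assms(2) by blast
  qed
  ultimately show "finite C \<and> card C \<le> k" by (auto simp: card_insert_disjoint)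
qed

lemma bnd_high:
  assumes "bnd a b (Suc k)" "b' < b" "a \<le> b'"
  shows "bnd a b' k"
  unfolding bnd_def
proof (intro allI impI)
  fix C assume C: "C \<subseteq> {a..b'}" and ch: "\<forall>p\<in>C. \<forall>q\<in>C. p \<le> q \<or> q \<le> p"
  have "insert b C \<subseteq> {a..b}"
  proof -
    have "\<forall>c\<in>C. a \<le> c \<and> c \<le> b"
    proof
      fix c assume "c \<in> C" then have 1: "a \<le> c" "c \<le> b'" using C by auto
      have "c \<le> b" using 1(2) assms(2) by (rule less_imp_le[OF le_less_trans])
      then show "a \<le> c \<and> c \<le> b" using 1 by simp
    qed
    moreover have "a \<le> b" using assms(3,2) by (rule less_imp_le[OF le_less_trans])
    ultimately show ?thesis by auto
  qed
  moreover have "\<forall>p\<in>insert b C. \<forall>q\<in>insert b C. p \<le> q \<or> q \<le> p"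
  proof -
    have "\<forall>c\<in>C. c \<le> b"
    proof
      fix c assume "c \<in> C" then have "c \<le> b'" using C by auto
      then show "c \<le> b" using less_imp_le[OF le_less_trans[OF _ assms(2)]] by blast
    qed
    then show ?thesis using ch by auto
  qed
  ultimately have "finite (insert b C) \<and> card (insert b C) \<le> Suc k"
    by (rule bndD[OF assms(1)])
  moreover have "b \<notin> C"
  proof
    assume "b \<in> C" then have "b \<le> b'" using C by auto
    then show False using leD assms(2) by blast
  qed
  ultimately show "finite C \<and> card C \<le> k" by (auto simp: card_insert_disjoint)
qed

lemma bnd_sub: "bnd a b k \<Longrightarrow> a \<le> a' \<Longrightarrow> b' \<le> b \<Longrightarrow> bnd a' b' k"
proof -
  assume h: "bnd a b k" "a \<le> a'" "b' \<le> b"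
  have "{a'..b'} \<subseteq> {a..b}"
  proof
    fix c assume "c \<in> {a'..b'}"
    then have "a' \<le> c" "c \<le> b'" by auto
    then show "c \<in> {a..b}" using h by (auto intro: order.trans)
  qed
  then show "bnd a' b' k" unfolding bnd_def
  proof (intro allI impI)
    fix C assume s: "{a'..b'} \<subseteq> {a..b}" and C: "C \<subseteq> {a'..b'}"
      and ch: "\<forall>p\<in>C. \<forall>q\<in>C. p \<le> q \<or> q \<le> p"
    have "C \<subseteq> {a..b}" using s C by (rule subset_trans[rotated])
    then show "finite C \<and> card C \<le> k" using bndD[OF h(1) _ ch] by simp
  qed
qed




lemma mc_Cons2:
  "maximal_chain x y (x' # a # rest) \<longleftrightarrow> x' = x \<and> x \<prec> a \<and> maximal_chain a y (a # rest)"
proof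
  assume h: "maximal_chain x y (x' # a # rest)"
  have "x' = x" using h unfolding maximal_chain_def by simp
  moreover have "x \<prec> a"
  proof -
    have "\<forall>i. Suc i < length (x' # a # rest) \<longrightarrow> (x' # a # rest) ! i \<prec> (x' # a # rest) ! Suc i"
      using h unfolding maximal_chain_def by blast
    from this[rule_format, of 0] show ?thesis using \<open>x' = x\<close> by simp
  qed
  moreover have "maximal_chain a y (a # rest)" unfolding maximal_chain_def
  proof (intro conjI allI impI)
    show "last (a # rest) = y" using h unfolding maximal_chain_def by simp
    fix i assume "Suc i < length (a # rest)"
    then have "Suc (Suc i) < length (x' # a # rest)" by simp
    then have "(x' # a # rest) ! Suc i \<prec> (x' # a # rest) ! Suc (Suc i)"
      using h unfolding maximal_chain_def by blast
    then show "(a # rest) ! i \<prec> (a # rest) ! Suc i" by simp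
  qed simp_all
  ultimately show "x' = x \<and> x \<prec> a \<and> maximal_chain a y (a # rest)" by blast
next
  assume h: "x' = x \<and> x \<prec> a \<and> maximal_chain a y (a # rest)"
  show "maximal_chain x y (x' # a # rest)" unfolding maximal_chain_def
  proof (intro conjI allI impI)
    show "last (x' # a # rest) = y" using h unfolding maximal_chain_def by simp
    fix i assume i: "Suc i < length (x' # a # rest)"
    show "(x' # a # rest) ! i \<prec> (x' # a # rest) ! Suc i"
    proof (cases i)
      case 0 then show ?thesis using h by simp
    next
      case (Suc j)
      then have "Suc j < length (a # rest)" using i by simp
      then have "(a # rest) ! j \<prec> (a # rest) ! Suc j" using h unfolding maximal_chain_def by blast
      then show ?thesis using Suc by simp
    qed
  qed (use h in simp_all)
qed

lemma mc_single: "maximal_chain x y [a] \<longleftrightarrow> a = x \<and> x = y"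
  unfolding maximal_chain_def by auto

lemma mc_nonempty: "maximal_chain x y xs \<Longrightarrow> \<exists>rest. xs = x # rest"
  unfolding maximal_chain_def by (cases xs) auto

lemma mc_le: "maximal_chain x y xs \<Longrightarrow> x \<le> y"
proof (induction xs arbitrary: x)
  case Nil then show ?case unfolding maximal_chain_def by simp
next
  case (Cons a xs)
  show ?case
  proof (cases xs)
    case Nil then show ?thesis using Cons.prems by (simp add: mc_single)
  next
    case (Cons b rest)
    then have "a = x" "x \<prec> b" "maximal_chain b y xs" using Cons.prems by (simp_all add: mc_Cons2)
    then have "x < b" "b \<le> y" using Cons.IH coversD(1) by auto
    then show ?thesis by simp
  qed
qed

lemma mc_refl: "maximal_chain x x xs \<Longrightarrow> xs = [x]"
proof -
  assume h: "maximal_chain x x xs"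
  obtain rest where xs: "xs = x # rest" using mc_nonempty[OF h] by blast
  show ?thesis
  proof (cases rest)
    case Nil then show ?thesis using xs by simp
  next
    case (Cons a r)
    then have "x \<prec> a" "maximal_chain a x (a # r)" using h xs by (simp_all add: mc_Cons2)
    then have "x < a" "a \<le> x" using mc_le coversD(1) by auto
    then show ?thesis by simp
  qed
qed

lemma mc_append:
  "maximal_chain x z xs \<Longrightarrow> maximal_chain z y ys \<Longrightarrow>
     maximal_chain x y (xs @ tl ys) \<and> chain_comp \<phi> (xs @ tl ys) = chain_comp \<phi> ys \<circ>\<^sub>m chain_comp \<phi> xs"
proof (induction xs arbitrary: x)
  case Nil then show ?case unfolding maximal_chain_def by simp
next
  case (Cons a xs)
  obtain ys' where ys: "ys = z # ys'" using mc_nonempty[OF Cons.prems(2)] by blast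
  show ?case
  proof (cases xs)
    case Nil
    then have "a = x" "x = z" using Cons.prems by (simp_all add: mc_single)
    then show ?thesis using Cons.prems Nil ys by simp
  next
    case (Cons b rest)
    then have h: "a = x" "x \<prec> b" "maximal_chain b z xs" using Cons.prems by (simp_all add: mc_Cons2)
    have IH: "maximal_chain b y (xs @ tl ys)" "chain_comp \<phi> (xs @ tl ys) = chain_comp \<phi> ys \<circ>\<^sub>m chain_comp \<phi> xs"
      using Cons.IH[OF h(3) Cons.prems(2)] by auto
    have e: "a # xs @ tl ys = x # b # (rest @ tl ys)" using h Cons by simp
    have "maximal_chain x y (a # xs @ tl ys)" unfolding e mc_Cons2 using h IH Cons by simp
    moreover have "chain_comp \<phi> (a # xs @ tl ys) = chain_comp \<phi> ys \<circ>\<^sub>m chain_comp \<phi> (a # xs)"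
      using IH Cons h by (simp add: map_comp_assoc)
    ultimately show ?thesis by simp
  qed
qed

lemma mc_exists: "bnd x y k \<Longrightarrow> x \<le> y \<Longrightarrow> \<exists>xs. maximal_chain x y xs"
proof (induction k arbitrary: x y)
  case 0 then show ?case using bnd_zero by blast
next
  case (Suc k)
  show ?case
  proof (cases "x = y")
    case True then show ?thesis using mc_single by blast
  next
    case False
    then have lt: "x < y" using Suc.prems by simp
    show ?thesis
    proof (cases "x \<prec> y")
      case True
      then have "maximal_chain x y [x, y]" by (simp add: mc_Cons2 mc_single)
      then show ?thesis by blast
    next
      case False
      then obtain z where z: "x < z" "z < y" using lt unfolding covers_def by blast
      have "bnd x z k" using bnd_high[OF Suc.prems(1) z(2)] z by simp
      then obtain xs where xs: "maximal_chain x z xs" using Suc.IH[OF _ less_imp_le[OF z(1)]] by blast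
      have "bnd z y k" using bnd_low[OF Suc.prems(1) z(1)] z by simp
      then obtain ys where ys: "maximal_chain z y ys" using Suc.IH[OF _ less_imp_le[OF z(2)]] by blast
      show ?thesis using mc_append[OF xs ys] by blast
    qed
  qed
qed




locale lcs_ctx =
  fixes L :: "'s::lattice \<Rightarrow> ('a, 'b) gorder_scheme"
    and \<phi> :: "'s \<Rightarrow> 's \<Rightarrow> ('a \<rightharpoonup> 'a)"
  assumes modl: "modular_lattice TYPE('s)"
    and finl: "finite_length TYPE('s)"
    and lcs: "locally_connected_system L \<phi>"
begin

lemma latL: "lattice (L x)"
  using lcs unfolding locally_connected_system_def lattice_finite_length_def by blast

lemma cover_good: "u \<prec> v \<Longrightarrow> good (L u) (L v) (\<phi> v u)"
  using lcs unfolding locally_connected_system_def good_def by blast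

lemma cover_nonempty: "u \<prec> v \<Longrightarrow> dom (\<phi> v u) \<noteq> {}"
  using lcs unfolding locally_connected_system_def by blast

lemma square:
  assumes "Lattices.inf x y \<prec> x" "Lattices.inf x y \<prec> y" "x \<prec> Lattices.sup x y" "y \<prec> Lattices.sup x y"
  shows "\<phi> (Lattices.sup x y) x \<circ>\<^sub>m \<phi> x (Lattices.inf x y)
           = \<phi> (Lattices.sup x y) y \<circ>\<^sub>m \<phi> y (Lattices.inf x y)"
    "ran (\<phi> (Lattices.sup x y) x) \<inter> ran (\<phi> (Lattices.sup x y) y)
           \<subseteq> ran (\<phi> (Lattices.sup x y) x \<circ>\<^sub>m \<phi> x (Lattices.inf x y))"
    "dom (\<phi> x (Lattices.inf x y)) \<inter> dom (\<phi> y (Lattices.inf x y))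
           \<subseteq> dom (\<phi> (Lattices.sup x y) x \<circ>\<^sub>m \<phi> x (Lattices.inf x y))"
  using lcs assms unfolding locally_connected_system_def by blast+

lemma mc_exists': "(x::'s) \<le> y \<Longrightarrow> \<exists>xs. maximal_chain x y xs"
proof -
  assume le: "x \<le> y"
  obtain k where "bnd x y k" using bnd_ex[OF finl, of x y] by blast
  then show ?thesis using mc_exists le by blast
qed

lemma indep:
  "bnd x y k \<Longrightarrow> maximal_chain x y xs \<Longrightarrow> maximal_chain x y ys \<Longrightarrow> chain_comp \<phi> xs = chain_comp \<phi> ys"
proof (induction k arbitrary: x xs ys)
  case 0 then show ?case using bnd_zero mc_le by blast
next
  case (Suc k)
  show ?case
  proof (cases "x = y")
    case True
    then show ?thesis using mc_refl Suc.prems by metis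
  next
    case False
    obtain xs' where xs: "xs = x # xs'" using mc_nonempty[OF Suc.prems(2)] by blast
    obtain ys' where ys: "ys = x # ys'" using mc_nonempty[OF Suc.prems(3)] by blast
    obtain a rx where xs': "xs' = a # rx" using xs Suc.prems(2) False
      by (cases xs') (auto simp: mc_single)
    obtain b ry where ys': "ys' = b # ry" using ys Suc.prems(3) False
      by (cases ys') (auto simp: mc_single)
    have ha: "x \<prec> a" "maximal_chain a y (a # rx)" using Suc.prems(2) xs xs' by (simp_all add: mc_Cons2)
    have hb: "x \<prec> b" "maximal_chain b y (b # ry)" using Suc.prems(3) ys ys' by (simp_all add: mc_Cons2)
    have ay: "a \<le> y" using mc_le[OF ha(2)] .
    have by': "b \<le> y" using mc_le[OF hb(2)] .
    have bnda: "bnd a y k" using bnd_low[OF Suc.prems(1) coversD(1)[OF ha(1)] ay] .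
    have bndb: "bnd b y k" using bnd_low[OF Suc.prems(1) coversD(1)[OF hb(1)] by'] .
    have cxs: "chain_comp \<phi> xs = chain_comp \<phi> (a # rx) \<circ>\<^sub>m \<phi> a x" using xs xs' by simp
    have cys: "chain_comp \<phi> ys = chain_comp \<phi> (b # ry) \<circ>\<^sub>m \<phi> b x" using ys ys' by simp
    show ?thesis
    proof (cases "a = b")
      case True
      then show ?thesis using Suc.IH[OF bnda ha(2)] hb(2) cxs cys by simp
    next
      case False
      define c where "c = Lattices.sup a b"
      have mab: "Lattices.inf a b = x" using cover_inf[OF ha(1) hb(1) False] .
      have ac: "a \<prec> c" unfolding c_def using cover_sup[OF modl ha(1) hb(1) False] .
      have bc: "b \<prec> c" unfolding c_def using cover_sup[OF modl hb(1) ha(1)] False by (simp add: sup_commute)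
      have cy: "c \<le> y" unfolding c_def using ay by' by simp
      obtain zs where zs: "maximal_chain c y zs" using mc_exists'[OF cy] by blast
      obtain zs' where zs': "zs = c # zs'" using mc_nonempty[OF zs] by blast
      have mca: "maximal_chain a y (a # zs)" using zs zs' ac by (simp add: mc_Cons2)
      have mcb: "maximal_chain b y (b # zs)" using zs zs' bc by (simp add: mc_Cons2)
      have e1: "chain_comp \<phi> (a # rx) = chain_comp \<phi> zs \<circ>\<^sub>m \<phi> c a"
        using Suc.IH[OF bnda ha(2) mca] zs' by simp
      have e2: "chain_comp \<phi> (b # ry) = chain_comp \<phi> zs \<circ>\<^sub>m \<phi> c b"
        using Suc.IH[OF bndb hb(2) mcb] zs' by simp
      have sq: "\<phi> c a \<circ>\<^sub>m \<phi> a x = \<phi> c b \<circ>\<^sub>m \<phi> b x"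
        using square(1)[of a b] mab ha(1) hb(1) ac bc unfolding c_def by simp
      have "chain_comp \<phi> xs = (chain_comp \<phi> zs \<circ>\<^sub>m \<phi> c a) \<circ>\<^sub>m \<phi> a x" using cxs e1 by simp
      also have "\<dots> = chain_comp \<phi> zs \<circ>\<^sub>m (\<phi> c a \<circ>\<^sub>m \<phi> a x)" by (rule map_comp_assoc)
      also have "\<dots> = chain_comp \<phi> zs \<circ>\<^sub>m (\<phi> c b \<circ>\<^sub>m \<phi> b x)" using sq by simp
      also have "\<dots> = (chain_comp \<phi> zs \<circ>\<^sub>m \<phi> c b) \<circ>\<^sub>m \<phi> b x" by (rule map_comp_assoc[symmetric])
      also have "\<dots> = chain_comp \<phi> ys" using cys e2 by simp
      finally show ?thesis .
    qed
  qed
qed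

lemma chain_indep: "maximal_chain x y xs \<Longrightarrow> maximal_chain x y ys \<Longrightarrow> chain_comp \<phi> xs = chain_comp \<phi> ys"
proof -
  assume h: "maximal_chain x y xs" "maximal_chain x y ys"
  obtain k where "bnd x y k" using bnd_ex[OF finl, of x y] by blast
  then show ?thesis using indep h by blast
qed

abbreviation "\<Phi> \<equiv> induced_maps L \<phi>"

lemma Phi_lt: "x < y \<Longrightarrow> maximal_chain x y xs \<Longrightarrow> \<Phi> y x = chain_comp \<phi> xs"
proof -
  assume lt: "x < y" and xs: "maximal_chain x y xs"
  have "maximal_chain x y (SOME xs. maximal_chain x y xs)" using xs by (rule someI)
  then have "chain_comp \<phi> (SOME xs. maximal_chain x y xs) = chain_comp \<phi> xs" using xs by (rule chain_indep)
  moreover have "\<Phi> y x = chain_comp \<phi> (SOME xs. maximal_chain x y xs)" using lt less_imp_neq[OF lt] unfolding induced_maps_def by simp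
  ultimately show ?thesis by simp
qed

lemma Phi_refl: "\<Phi> x x = id_on_carrier (L x)"
  unfolding induced_maps_def by simp

lemma Phi_cover: "x \<prec> y \<Longrightarrow> \<Phi> y x = \<phi> y x"
proof -
  assume c: "x \<prec> y"
  have "maximal_chain x y [x, y]" using c by (simp add: mc_Cons2 mc_single)
  then show ?thesis using Phi_lt coversD(1)[OF c] by simp
qed

lemma chain_good: "maximal_chain x y (x # a # rest) \<Longrightarrow> good (L x) (L y) (chain_comp \<phi> (x # a # rest))"
proof (induction rest arbitrary: x a)
  case Nil
  then have "x \<prec> a \<and> maximal_chain a y [a]" by (simp only: mc_Cons2) 
  then have h: "x \<prec> a" "a = y" by (auto simp: mc_single)
  then show ?case using cover_good[OF h(1)] by simp
next
  case (Cons b rest)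
  then have h: "x \<prec> a" "maximal_chain a y (a # b # rest)" by (simp_all add: mc_Cons2)
  have "good (L a) (L y) (chain_comp \<phi> (a # b # rest))" using Cons.IH[OF h(2)] .
  then show ?case using good_comp[OF latL latL latL cover_good[OF h(1)]] by simp
qed

lemma Phi_good: "x \<le> y \<Longrightarrow> good (L x) (L y) (\<Phi> y x)"
proof (cases "x = y")
  case True then show ?thesis using good_id[OF latL] Phi_refl by simp
next
  case False
  assume le: "x \<le> y"
  then have lt: "x < y" using False by simp
  obtain xs where xs: "maximal_chain x y xs" using mc_exists'[OF le] by blast
  obtain xs' where e: "xs = x # xs'" using mc_nonempty[OF xs] by blast
  obtain a rest where e': "xs' = a # rest" using xs e False by (cases xs') (auto simp: mc_single)
  show ?thesis using Phi_lt[OF lt xs] chain_good xs e e' by simp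
qed

lemma Phi_trans:
  assumes "x \<le> z" "z \<le> y"
  shows "\<Phi> y x = \<Phi> y z \<circ>\<^sub>m \<Phi> z x"
proof (cases "x = z")
  case True
  have d: "dom (\<Phi> y z) \<subseteq> carrier (L z)" using good_parts(1)[OF Phi_good[OF assms(2)]] .
  show ?thesis
  proof (rule ext)
    fix k show "\<Phi> y x k = (\<Phi> y z \<circ>\<^sub>m \<Phi> z x) k"
      using d True by (auto simp: Phi_refl id_on_carrier_def map_comp_def)
  qed
next
  case False
  note xz = False
  show ?thesis
  proof (cases "z = y")
    case True
    have r: "ran (\<Phi> y x) \<subseteq> carrier (L y)" using good_parts(2)[OF Phi_good] assms order.trans by blast
    show ?thesis
    proof (rule ext)
      fix k show "\<Phi> y x k = (\<Phi> y z \<circ>\<^sub>m \<Phi> z x) k"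
        using r True by (cases "\<Phi> y x k") (auto simp: Phi_refl id_on_carrier_def map_comp_def ranI)
    qed
  next
    case False
    have l1: "x < z" using xz assms by simp
    have l2: "z < y" using False assms by simp
    have l3: "x < y" using l1 l2 by (rule less_trans)
    obtain xs where xs: "maximal_chain x z xs" using mc_exists'[OF assms(1)] by blast
    obtain ys where ys: "maximal_chain z y ys" using mc_exists'[OF assms(2)] by blast
    show ?thesis using mc_append[OF xs ys, of \<phi>] Phi_lt[OF l1 xs] Phi_lt[OF l2 ys] Phi_lt[OF l3] by metis
  qed
qed

end



context lcs_ctx
begin

lemma split_facts:
  fixes x y m j x' :: 's
  assumes m: "Lattices.inf x y = m" and j: "Lattices.sup x y = j"
    and x1: "m < x'" and x2: "x' < x"
  shows "Lattices.inf x' y = m" "Lattices.sup x' y \<le> j" "Lattices.sup x' y < j"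
    "Lattices.inf x (Lattices.sup x' y) = x'" "Lattices.sup x (Lattices.sup x' y) = j"
    "m \<le> Lattices.sup x' y" "y \<le> Lattices.sup x' y" "x' \<le> Lattices.sup x' y" "m \<le> x'"
    "x' \<le> j" "x \<le> j" "y \<le> j" "m \<le> y"
proof -
  have x'x: "x' \<le> x" using x2 by (rule less_imp_le)
  have mx': "m \<le> x'" using x1 by (rule less_imp_le)
  show "m \<le> x'" by fact
  show i1: "Lattices.inf x' y = m"
  proof (rule antisym)
    show "Lattices.inf x' y \<le> m" unfolding m[symmetric] using x'x by (simp add: le_infI1)
    show "m \<le> Lattices.inf x' y" using mx' m by auto
  qed
  show "Lattices.sup x' y \<le> j" unfolding j[symmetric] using x'x by (simp add: le_supI1)
  have i2: "Lattices.inf x (Lattices.sup x' y) = x'"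
  proof -
    have "Lattices.sup x' (Lattices.inf y x) = Lattices.inf (Lattices.sup x' y) x"
      using modularD[OF modl x'x] .
    moreover have "Lattices.inf y x = m" using m by (simp add: inf_commute)
    ultimately show ?thesis using mx' by (simp add: inf_commute sup.absorb1)
  qed
  show "Lattices.inf x (Lattices.sup x' y) = x'" by fact
  show "Lattices.sup x (Lattices.sup x' y) = j"
    unfolding j[symmetric] using x'x by (metis sup.absorb1 sup_assoc)
  show "Lattices.sup x' y < j"
  proof -
    have le: "Lattices.sup x' y \<le> j" unfolding j[symmetric] using x'x by (simp add: le_supI1)
    have "Lattices.sup x' y \<noteq> j"
    proof
      assume e: "Lattices.sup x' y = j"
      have "x = Lattices.inf x j" unfolding j[symmetric] by simp
      also have "\<dots> = x'" using i2 e by simp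
      finally show False using x2 by simp
    qed
    then show ?thesis using le by (metis order.not_eq_order_implies_strict)
  qed
  show "m \<le> Lattices.sup x' y" using mx' by (simp add: le_supI1)
  show "y \<le> Lattices.sup x' y" by simp
  show "x' \<le> Lattices.sup x' y" by simp
  show "x' \<le> j" using x'x j by (metis le_supI1)
  show "x \<le> j" using j by auto
  show "y \<le> j" using j by auto
  show "m \<le> y" using m by auto
qed

definition Rp :: "'s \<Rightarrow> 's \<Rightarrow> bool" where
  "Rp x y \<longleftrightarrow> ran (\<Phi> (Lattices.sup x y) x) \<inter> ran (\<Phi> (Lattices.sup x y) y)
              \<subseteq> ran (\<Phi> (Lattices.sup x y) (Lattices.inf x y))"

definition Dp :: "'s \<Rightarrow> 's \<Rightarrow> bool" where
  "Dp x y \<longleftrightarrow> dom (\<Phi> x (Lattices.inf x y)) \<inter> dom (\<Phi> y (Lattices.inf x y))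
              \<subseteq> dom (\<Phi> (Lattices.sup x y) (Lattices.inf x y))"

lemma Rp_sym: "Rp x y \<longleftrightarrow> Rp y x"
  unfolding Rp_def by (simp add: sup_commute inf_commute Int_commute)

lemma Dp_sym: "Dp x y \<longleftrightarrow> Dp y x"
  unfolding Dp_def by (simp add: sup_commute inf_commute Int_commute)

lemma ran_comp_iff: "c \<in> ran (g \<circ>\<^sub>m f) \<longleftrightarrow> (\<exists>b. b \<in> ran f \<and> g b = Some c)"
  by (auto simp: ran_def map_comp_Some_iff)

lemma dom_comp_iff: "a \<in> dom (g \<circ>\<^sub>m f) \<longleftrightarrow> (\<exists>b. f a = Some b \<and> b \<in> dom g)"
  by (auto simp: dom_def map_comp_Some_iff)

lemma Rp_step:
  assumes IH: "\<forall>x y. bnd (Lattices.inf x y) (Lattices.sup x y) k \<longrightarrow> Rp x y"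
    and b: "bnd (Lattices.inf x y) (Lattices.sup x y) (Suc k)"
    and x1: "Lattices.inf x y < x'" and x2: "x' < x"
  shows "Rp x y"
proof -
  define m where "m = Lattices.inf x y"
  define j where "j = Lattices.sup x y"
  define y' where "y' = Lattices.sup x' y"
  have m: "Lattices.inf x y = m" and j: "Lattices.sup x y = j" using m_def j_def by simp_all
  note F = split_facts[OF m j x1[unfolded m] x2, folded y'_def]
  have b': "bnd m j (Suc k)" using b m j by simp
  have bnd1: "bnd x' j k" using bnd_low[OF b' x1[unfolded m] F(10)] .
  have bnd2: "bnd m y' k" using bnd_high[OF b' F(3) F(6)] .
  have R1: "Rp x y'" using IH bnd1 F(4) F(5) by simp
  have R2: "Rp x' y" using IH bnd2 F(1) y'_def by simp
  have R1': "ran (\<Phi> j x) \<inter> ran (\<Phi> j y') \<subseteq> ran (\<Phi> j x')" using R1 F(4) F(5) unfolding Rp_def by simp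
  have R2': "ran (\<Phi> y' x') \<inter> ran (\<Phi> y' y) \<subseteq> ran (\<Phi> y' m)" using R2 F(1) y'_def unfolding Rp_def by simp
  have y'j: "y' \<le> j" using F(2) by simp
  have T1: "\<Phi> j y = \<Phi> j y' \<circ>\<^sub>m \<Phi> y' y" using Phi_trans[OF F(7) y'j] .
  have T2: "\<Phi> j x' = \<Phi> j y' \<circ>\<^sub>m \<Phi> y' x'" using Phi_trans[OF F(8) y'j] .
  have T3: "\<Phi> j m = \<Phi> j y' \<circ>\<^sub>m \<Phi> y' m" using Phi_trans[OF F(6) y'j] .
  have inj: "inj_on (\<Phi> j y') (dom (\<Phi> j y'))" using good_parts(3)[OF Phi_good[OF y'j]] .
  show ?thesis unfolding Rp_def m j
  proof
    fix a assume a: "a \<in> ran (\<Phi> j x) \<inter> ran (\<Phi> j y)"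
    obtain c where c: "c \<in> ran (\<Phi> y' y)" "\<Phi> j y' c = Some a"
      using a T1 ran_comp_iff by (metis IntD2)
    have "a \<in> ran (\<Phi> j y')" using c(2) by (rule ranI)
    then have "a \<in> ran (\<Phi> j x')" using R1' a by blast
    then obtain b where bb: "b \<in> ran (\<Phi> y' x')" "\<Phi> j y' b = Some a"
      using T2 ran_comp_iff by metis
    have "b = c" using inj bb(2) c(2) by (metis domI inj_onD)
    then have "b \<in> ran (\<Phi> y' m)" using R2' bb(1) c(1) by blast
    then show "a \<in> ran (\<Phi> j m)" using T3 ran_comp_iff bb(2) by metis
  qed
qed

lemma Dp_step:
  assumes IH: "\<forall>x y. bnd (Lattices.inf x y) (Lattices.sup x y) k \<longrightarrow> Dp x y"
    and b: "bnd (Lattices.inf x y) (Lattices.sup x y) (Suc k)"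
    and x1: "Lattices.inf x y < x'" and x2: "x' < x"
  shows "Dp x y"
proof -
  define m where "m = Lattices.inf x y"
  define j where "j = Lattices.sup x y"
  define y' where "y' = Lattices.sup x' y"
  have m: "Lattices.inf x y = m" and j: "Lattices.sup x y = j" using m_def j_def by simp_all
  note F = split_facts[OF m j x1[unfolded m] x2, folded y'_def]
  have b': "bnd m j (Suc k)" using b m j by simp
  have bnd1: "bnd x' j k" using bnd_low[OF b' x1[unfolded m] F(10)] .
  have bnd2: "bnd m y' k" using bnd_high[OF b' F(3) F(6)] .
  have D1: "Dp x y'" using IH bnd1 F(4) F(5) by simp
  have D2: "Dp x' y" using IH bnd2 F(1) y'_def by simp
  have D1': "dom (\<Phi> x x') \<inter> dom (\<Phi> y' x') \<subseteq> dom (\<Phi> j x')" using D1 F(4) F(5) unfolding Dp_def by simp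
  have D2': "dom (\<Phi> x' m) \<inter> dom (\<Phi> y m) \<subseteq> dom (\<Phi> y' m)" using D2 F(1) y'_def unfolding Dp_def by simp
  have x'x: "x' \<le> x" using x2 by (rule less_imp_le)
  have T1: "\<Phi> x m = \<Phi> x x' \<circ>\<^sub>m \<Phi> x' m" using Phi_trans[OF F(9) x'x] .
  have T2: "\<Phi> y' m = \<Phi> y' x' \<circ>\<^sub>m \<Phi> x' m" using Phi_trans[OF F(9) F(8)] .
  have T3: "\<Phi> j m = \<Phi> j x' \<circ>\<^sub>m \<Phi> x' m" using Phi_trans[OF F(9) F(10)] .
  show ?thesis unfolding Dp_def m j
  proof
    fix a assume a: "a \<in> dom (\<Phi> x m) \<inter> dom (\<Phi> y m)"
    obtain b where bb: "\<Phi> x' m a = Some b" "b \<in> dom (\<Phi> x x')"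
      using a T1 dom_comp_iff by (metis IntD1)
    have "a \<in> dom (\<Phi> x' m)" using bb(1) by (rule domI)
    then have "a \<in> dom (\<Phi> y' m)" using D2' a by blast
    then have "b \<in> dom (\<Phi> y' x')" using T2 dom_comp_iff bb(1) by (metis option.inject)
    then have "b \<in> dom (\<Phi> j x')" using D1' bb(2) by blast
    then show "a \<in> dom (\<Phi> j m)" using T3 dom_comp_iff bb(1) by metis
  qed
qed

lemma Rp_Dp_all: "bnd (Lattices.inf x y) (Lattices.sup x y) k \<Longrightarrow> Rp x y \<and> Dp x y"
proof (induction k arbitrary: x y)
  case 0
  then show ?case using bnd_zero by (metis inf_le1 le_supI1)
next
  case (Suc k)
  have IHR: "\<forall>x y. bnd (Lattices.inf x y) (Lattices.sup x y) k \<longrightarrow> Rp x y" using Suc.IH by blast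
  have IHD: "\<forall>x y. bnd (Lattices.inf x y) (Lattices.sup x y) k \<longrightarrow> Dp x y" using Suc.IH by blast
  have bs: "bnd (Lattices.inf y x) (Lattices.sup y x) (Suc k)" using Suc.prems by (simp add: inf_commute sup_commute)
  show ?case
  proof (cases "x \<le> y")
    case True
    then have "Lattices.inf x y = x" "Lattices.sup x y = y" by (simp_all add: inf.absorb1 sup.absorb2)
    then show ?thesis unfolding Rp_def Dp_def by auto
  next
    case nxy: False
    show ?thesis
    proof (cases "y \<le> x")
      case True
      then have "Lattices.inf x y = y" "Lattices.sup x y = x" by (simp_all add: inf.absorb2 sup.absorb1)
      then show ?thesis unfolding Rp_def Dp_def by auto
    next
      case nyx: False
      define m where "m = Lattices.inf x y"
      have n1: "m \<noteq> x" unfolding m_def using nxy inf.absorb_iff1[of x y] by auto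
      have n2: "m \<noteq> y" unfolding m_def using nyx inf.absorb_iff2[of y x] by auto
      have mx: "m < x" using n1 inf_le1[of x y] unfolding m_def by (simp add: order.not_eq_order_implies_strict)
      have my: "m < y" using n2 inf_le2[of x y] unfolding m_def by (simp add: order.not_eq_order_implies_strict)
      show ?thesis
      proof (cases "\<exists>x'. m < x' \<and> x' < x")
        case True
        then obtain x' where "m < x'" "x' < x" by blast
        then show ?thesis using Rp_step[OF IHR Suc.prems] Dp_step[OF IHD Suc.prems] m_def by simp
      next
        case nx: False
        show ?thesis
        proof (cases "\<exists>y'. m < y' \<and> y' < y")
          case True
          then obtain y' where y': "Lattices.inf y x < y'" "y' < y" using m_def by (auto simp: inf_commute)
          show ?thesis using Rp_step[OF IHR bs y'] Dp_step[OF IHD bs y'] Rp_sym Dp_sym by simp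
        next
          case ny: False
          have cx: "m \<prec> x" using mx nx unfolding covers_def by blast
          have cy: "m \<prec> y" using my ny unfolding covers_def by blast
          have xy: "x \<noteq> y" using nxy by auto
          have jx: "x \<prec> Lattices.sup x y" using cover_sup[OF modl cx cy xy] .
          have jy: "y \<prec> Lattices.sup x y" using cover_sup[OF modl cy cx] xy by (simp add: sup_commute)
          have cx': "Lattices.inf x y \<prec> x" and cy': "Lattices.inf x y \<prec> y" using cx cy m_def by simp_all
          note sq = square[OF cx' cy' jx jy]
          have T: "\<Phi> (Lattices.sup x y) (Lattices.inf x y) = \<phi> (Lattices.sup x y) x \<circ>\<^sub>m \<phi> x (Lattices.inf x y)"
            using Phi_trans[OF less_imp_le[OF coversD(1)[OF cx']] less_imp_le[OF coversD(1)[OF jx]]]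
              Phi_cover[OF cx'] Phi_cover[OF jx] by simp
          show ?thesis unfolding Rp_def Dp_def T
            using sq(2,3) Phi_cover[OF cx'] Phi_cover[OF cy'] Phi_cover[OF jx] Phi_cover[OF jy] by simp
        qed
      qed
    qed
  qed
qed

end

theorem theorem4p3:
  fixes L :: "'s::lattice \<Rightarrow> ('a, 'b) gorder_scheme"
    and \<phi> :: "'s \<Rightarrow> 's \<Rightarrow> ('a \<rightharpoonup> 'a)"
  assumes "modular_lattice TYPE('s)"
    and "finite_length TYPE('s)"
    and "locally_connected_system L \<phi>"
  shows "(\<forall>x y xs ys. x < y \<and> maximal_chain x y xs \<and> maximal_chain x y ys
            \<longrightarrow> chain_comp \<phi> xs = chain_comp \<phi> ys)
         \<and> connected_system L (induced_maps L \<phi>)"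
proof -
  interpret lcs_ctx L \<phi> using assms by unfold_locales
  have P1: "\<forall>x y xs ys. x < y \<and> maximal_chain x y xs \<and> maximal_chain x y ys
            \<longrightarrow> chain_comp \<phi> xs = chain_comp \<phi> ys"
  proof (intro allI impI)
    fix x y :: 's and xs ys assume "x < y \<and> maximal_chain x y xs \<and> maximal_chain x y ys"
    then show "chain_comp \<phi> xs = chain_comp \<phi> ys" using chain_indep by blast
  qed
  have c1: "\<forall>x. lattice_finite_length (L x)"
    using assms(3) unfolding locally_connected_system_def by blast
  have c2: "\<forall>x y. x \<le> y \<longrightarrow> partial_bij (L x) (L y) (induced_maps L \<phi> y x)"
  proof (intro allI impI)
    fix x y :: 's assume le: "x \<le> y"
    show "partial_bij (L x) (L y) (induced_maps L \<phi> y x)" unfolding partial_bij_def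
      using good_parts[OF Phi_good[OF le]] by simp
  qed
  have c3: "\<forall>x y. x \<le> y \<longrightarrow> induced_maps L \<phi> y x \<noteq> Map.empty \<longrightarrow>
        lat_filter (L x) (dom (induced_maps L \<phi> y x)) \<and> lat_ideal (L y) (ran (induced_maps L \<phi> y x)) \<and>
        lattice_iso_between (L x) (L y) (induced_maps L \<phi> y x)"
  proof (intro allI impI)
    fix x y :: 's assume le: "x \<le> y"
    show "lat_filter (L x) (dom (induced_maps L \<phi> y x)) \<and> lat_ideal (L y) (ran (induced_maps L \<phi> y x)) \<and>
        lattice_iso_between (L x) (L y) (induced_maps L \<phi> y x)" using Phi_good[OF le] unfolding good_def by simp
  qed
  have c4: "\<forall>x. induced_maps L \<phi> x x = id_on_carrier (L x)" using Phi_refl by blast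
  have c5: "\<forall>x y. x \<prec> y \<longrightarrow> induced_maps L \<phi> y x \<noteq> Map.empty"
  proof (intro allI impI)
    fix x y :: 's assume c: "x \<prec> y"
    have "dom (\<phi> y x) \<noteq> {}" using cover_nonempty[OF c] .
    then show "induced_maps L \<phi> y x \<noteq> Map.empty" using Phi_cover[OF c] by auto
  qed
  have c6: "\<forall>x y z. x \<le> z \<and> z \<le> y \<longrightarrow> induced_maps L \<phi> y x = induced_maps L \<phi> y z \<circ>\<^sub>m induced_maps L \<phi> z x"
  proof (intro allI impI)
    fix x y z :: 's assume "x \<le> z \<and> z \<le> y"
    then show "induced_maps L \<phi> y x = induced_maps L \<phi> y z \<circ>\<^sub>m induced_maps L \<phi> z x"
      using Phi_trans by blast
  qed
  have RD: "Rp x y \<and> Dp x y" for x y :: 's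
  proof -
    obtain k where "bnd (Lattices.inf x y) (Lattices.sup x y) k"
      using bnd_ex[OF assms(2), of "Lattices.inf x y" "Lattices.sup x y"] by blast
    then show ?thesis by (rule Rp_Dp_all)
  qed
  have c7: "\<forall>x y. ran (induced_maps L \<phi> (Lattices.sup x y) x) \<inter> ran (induced_maps L \<phi> (Lattices.sup x y) y)
              \<subseteq> ran (induced_maps L \<phi> (Lattices.sup x y) (Lattices.inf x y))"
    using RD unfolding Rp_def by simp
  have c8: "\<forall>x y. dom (induced_maps L \<phi> x (Lattices.inf x y)) \<inter> dom (induced_maps L \<phi> y (Lattices.inf x y))
              \<subseteq> dom (induced_maps L \<phi> (Lattices.sup x y) (Lattices.inf x y))"
    using RD unfolding Dp_def by simp
  have CS: "connected_system L (induced_maps L \<phi>)" unfolding connected_system_def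
    using c1 c2 c3 c4 c5 c6 c7 c8 by (intro conjI)
  show ?thesis using P1 CS by (rule conjI)
qed


end
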